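(* Let $k \ge 3$ and $q \ge 0$ be integers with $k$ odd, and let $s \in \{0,1,2\}$ be the unique integer satisfying $s \equiv q + \frac{k-3}{2} \pmod 3$. Then, for any integer $n$ such that \[n \ge \max\left\{k,\frac{k^2}{6} + \frac{q-s}{3} k + s - \frac{1}{2}\right\}\] and any function $f:[n]\to \{-1,1\}$ with $|f([n])| \le q$, there is a $k$-block $B\subseteq[n]$ with $|f(B)|=1$.
   Context: $[n]=\{1,\dots,n\}$; $f(Y)=\sum_{y\in Y}f(y)$; a $k$-block is a set of $k$ consecutive integers. *)

theory Defs
  imports Main "HOL.Real"
begin

definition kblock :: "nat \<Rightarrow> nat \<Rightarrow> nat set" where
  "kblock k a = {a..<a+k}"

end

theory Submission
  imports Defs
begin

lemma sum_pm_parity: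
  fixes f :: "nat \<Rightarrow> int"
  assumes "finite A" "\<forall>i\<in>A. f i \<in> {-1,1}"
  shows "even (sum f A - int (card A))"
  using assms
proof (induction A rule: finite_induct)
  case empty then show ?case by simp
next
  case (insert x F)
  have "sum f (insert x F) - int (card (insert x F)) = (f x - 1) + (sum f F - int (card F))"
    using insert by simp
  moreover have "even (f x - 1)" using insert.prems by auto
  ultimately show ?case using insert by simp
qed

lemma sum_ge_neg_card:
  fixes f :: "nat \<Rightarrow> int"
  assumes "\<forall>i\<in>A. f i \<in> {-1,1}"
  shows "sum f A \<ge> - int (card A)"
proof (cases "finite A")
  case True
  have "(\<Sum>i\<in>A. (-1::int)) \<le> sum f A" by (rule sum_mono) (use assms in auto)
  then show ?thesis by simp
qed simp

lemma sum_le_card: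
  fixes f :: "nat \<Rightarrow> int"
  assumes "\<forall>i\<in>A. f i \<in> {-1,1}"
  shows "sum f A \<le> int (card A)"
proof (cases "finite A")
  case True
  have "sum f A \<le> (\<Sum>i\<in>A. (1::int))" by (rule sum_mono) (use assms in auto)
  then show ?thesis by simp
qed simp

lemma prefix_bound:
  fixes f :: "nat \<Rightarrow> int"
  assumes blk: "\<And>a. 1 \<le> a \<Longrightarrow> a + k \<le> n + 1 \<Longrightarrow> (\<Sum>i\<in>{a..<a+k}. f i) \<ge> 3"
  shows "j * k \<le> n \<Longrightarrow> (\<Sum>i\<in>{1..<1+j*k}. f i) \<ge> 3 * int j"
proof (induction j)
  case 0 then show ?case by simp
next
  case (Suc j)
  have "j*k \<le> n" using Suc.prems by simp
  then have IH: "(\<Sum>i\<in>{1..<1+j*k}. f i) \<ge> 3 * int j" using Suc.IH by simp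
  have B: "(\<Sum>i\<in>{1+j*k..<1+j*k+k}. f i) \<ge> 3" using blk[of "1+j*k"] Suc.prems by simp
  have "(\<Sum>i\<in>{1..<1+Suc j*k}. f i) = (\<Sum>i\<in>{1..<1+j*k}. f i) + (\<Sum>i\<in>{1+j*k..<1+j*k+k}. f i)"
  proof -
    have e: "1+Suc j*k = 1+j*k+k" by simp
    show ?thesis unfolding e by (rule sum.atLeastLessThan_concat[symmetric]) auto
  qed
  then show ?case using IH B by simp
qed

lemma seg_bound:
  fixes f :: "nat \<Rightarrow> int"
  assumes blk: "\<And>a. 1 \<le> a \<Longrightarrow> a + k \<le> n + 1 \<Longrightarrow> (\<Sum>i\<in>{a..<a+k}. f i) \<ge> 3"
    and pm: "\<forall>i\<in>{1..n}. f i \<in> {-1,1}"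
    and a: "1 \<le> a" and r: "r < k" and an: "a + k + r = n + 1"
  shows "(\<Sum>i\<in>{a..<a+k+r}. f i) \<ge> 3 - int r"
    and "(\<Sum>i\<in>{a..<a+k+r}. f i) \<ge> 3 * 2 + int r - int k"
proof -
  have pmS: "\<forall>i\<in>{x..<y}. f i \<in> {-1,1}" if "1 \<le> x" "y \<le> n+1" for x y
    using pm that by auto
  have B1: "(\<Sum>i\<in>{a..<a+k}. f i) \<ge> 3" using blk[of a] a an by simp
  have B2: "(\<Sum>i\<in>{a+r..<a+r+k}. f i) \<ge> 3" using blk[of "a+r"] a an by simp
  have L: "(\<Sum>i\<in>{a+k..<a+k+r}. f i) \<ge> - int r"
    using sum_ge_neg_card[OF pmS[of "a+k" "a+k+r"]] a an by simp
  have M: "(\<Sum>i\<in>{a+r..<a+k}. f i) \<le> int (k - r)"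
    using sum_le_card[OF pmS[of "a+r" "a+k"]] a an by simp
  have s1: "(\<Sum>i\<in>{a..<a+k+r}. f i) = (\<Sum>i\<in>{a..<a+k}. f i) + (\<Sum>i\<in>{a+k..<a+k+r}. f i)"
    using sum.atLeastLessThan_concat[of a "a+k" "a+k+r" f] by simp
  have s2: "(\<Sum>i\<in>{a..<a+k+r}. f i) = (\<Sum>i\<in>{a..<a+r}. f i) + (\<Sum>i\<in>{a+r..<a+r+k}. f i)"
  proof -
    have e: "a+r+k = a+k+r" by simp
    show ?thesis unfolding e by (rule sum.atLeastLessThan_concat[symmetric]) auto
  qed
  have s3: "(\<Sum>i\<in>{a..<a+k}. f i) = (\<Sum>i\<in>{a..<a+r}. f i) + (\<Sum>i\<in>{a+r..<a+k}. f i)"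
    using sum.atLeastLessThan_concat[of a "a+r" "a+k" f] r by simp
  show "(\<Sum>i\<in>{a..<a+k+r}. f i) \<ge> 3 - int r" using s1 B1 L by simp
  show "(\<Sum>i\<in>{a..<a+k+r}. f i) \<ge> 3 * 2 + int r - int k"
    using s1 s2 s3 B1 B2 L M r by (simp add: of_nat_diff)
qed

lemma total_bound:
  fixes f :: "nat \<Rightarrow> int"
  assumes blk: "\<And>a. 1 \<le> a \<Longrightarrow> a + k \<le> n + 1 \<Longrightarrow> (\<Sum>i\<in>{a..<a+k}. f i) \<ge> 3"
    and pm: "\<forall>i\<in>{1..n}. f i \<in> {-1,1}"
    and nk: "k \<le> n" and k: "k > 0"
  shows "(\<Sum>i\<in>{1..n}. f i) \<ge> 3 * int (n div k) - int (n mod k)"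
    and "(\<Sum>i\<in>{1..n}. f i) \<ge> 3 * int (n div k) + int (n mod k) - int k + 3"
proof -
  define m where "m = n div k"
  define r where "r = n mod k"
  have n: "n = m*k + r" unfolding m_def r_def by simp
  have m1: "m \<ge> 1" unfolding m_def using nk k using div_le_mono[OF nk, of k] k by simp
  have rk: "r < k" unfolding r_def using k by simp
  obtain j where j: "m = Suc j" using m1 by (cases m) auto
  have P: "(\<Sum>i\<in>{1..<1+j*k}. f i) \<ge> 3 * int j"
    by (rule prefix_bound[OF blk]) (use n j in auto)
  have an: "(1+j*k) + k + r = n + 1" using n j by simp
  note S = seg_bound[OF blk pm _ rk an]
  have T: "(\<Sum>i\<in>{1..n}. f i) = (\<Sum>i\<in>{1..<1+j*k}. f i) + (\<Sum>i\<in>{1+j*k..<1+j*k+k+r}. f i)"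
  proof -
    have "{1..n} = {1..<(1+j*k)+k+r}" using an by auto
    then show ?thesis using sum.atLeastLessThan_concat[of 1 "1+j*k" "1+j*k+k+r" f] by simp
  qed
  show "(\<Sum>i\<in>{1..n}. f i) \<ge> 3 * int (n div k) - int (n mod k)"
    using T P S(1) j unfolding m_def[symmetric] r_def[symmetric] by simp
  show "(\<Sum>i\<in>{1..n}. f i) \<ge> 3 * int (n div k) + int (n mod k) - int k + 3"
    using T P S(2) j unfolding m_def[symmetric] r_def[symmetric] by simp
qed

lemma arith_final:
  fixes T :: int and k h q t s n :: nat
  assumes k: "k = 2*h+3" and q: "q + h = 3*t + s" and s: "s \<le> 2"
    and n: "n \<ge> k*t + h + 1 + s"
    and T1: "T \<ge> 3 * int (n div k) - int (n mod k)"
    and T2: "T \<ge> 3 * int (n div k) + int (n mod k) - int k + 3"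
  shows "T \<ge> int q + 1"
proof -
  define m where "m = n div k"
  define r where "r = n mod k"
  have nn: "n = m*k + r" unfolding m_def r_def by simp
  have rk: "r < k" unfolding r_def using k by simp
  consider "m < t" | "m = t" | "m \<ge> t + 1" by linarith
  then show ?thesis
  proof cases
    case 1
    then have "(m+1)*k \<le> t*k" by (intro mult_le_mono1) simp
    then show ?thesis using n nn rk by (simp add: algebra_simps)
  next
    case 2
    then have "r \<ge> h + 1 + s" using n nn by (simp add: algebra_simps)
    then show ?thesis using T2 q k 2 unfolding m_def[symmetric] r_def[symmetric] by linarith
  next
    case 3
    show ?thesis
    proof (cases "r \<le> h")
      case True then show ?thesis using T1 q k s 3 unfolding m_def[symmetric] r_def[symmetric] by linarith
    next
      case False then show ?thesis using T2 q k s 3 unfolding m_def[symmetric] r_def[symmetric] by linarith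
    qed
  qed
qed

lemma block_shift:
  fixes f :: "nat \<Rightarrow> int"
  shows "(\<Sum>i\<in>{Suc a..<Suc a+k}. f i) = (\<Sum>i\<in>{a..<a+k}. f i) - f a + f (a+k)"
proof -
  have "(\<Sum>i\<in>{a..<Suc (a+k)}. f i) = f a + (\<Sum>i\<in>{Suc a..<Suc (a+k)}. f i)"
    by (rule sum.atLeast_Suc_lessThan) simp
  moreover have "(\<Sum>i\<in>{a..<Suc (a+k)}. f i) = (\<Sum>i\<in>{a..<a+k}. f i) + f (a+k)"
    by (rule sum.atLeastLessThan_Suc) simp
  ultimately show ?thesis by simp
qed

lemma all_ge3:
  fixes f :: "nat \<Rightarrow> int"
  assumes pm: "\<forall>i\<in>{1..n}. f i \<in> {-1,1}" and ok: "odd k"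
    and nogood: "\<And>a. 1 \<le> a \<Longrightarrow> a + k \<le> n + 1 \<Longrightarrow> \<bar>\<Sum>i\<in>{a..<a+k}. f i\<bar> \<noteq> 1"
    and s1: "(\<Sum>i\<in>{1..<1+k}. f i) \<ge> 1"
  shows "1 \<le> a \<Longrightarrow> a + k \<le> n + 1 \<Longrightarrow> (\<Sum>i\<in>{a..<a+k}. f i) \<ge> 3"
proof -
  have odd: "odd (\<Sum>i\<in>{a..<a+k}. f i)" if "1 \<le> a" "a + k \<le> n + 1" for a
  proof -
    have "even ((\<Sum>i\<in>{a..<a+k}. f i) - int (card {a..<a+k}))"
      by (rule sum_pm_parity) (use pm that in auto)
    then show ?thesis using ok by simp
  qed
  have main: "d + 1 + k \<le> n + 1 \<Longrightarrow> (\<Sum>i\<in>{d+1..<d+1+k}. f i) \<ge> 3" for d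
  proof (induction d)
    case 0
    have "(\<Sum>i\<in>{1..<1+k}. f i) \<noteq> 1" using nogood[of 1] 0 s1 by auto
    moreover have "(\<Sum>i\<in>{1..<1+k}. f i) \<noteq> 2" using odd[of 1] 0 by auto
    ultimately show ?case using s1 by simp
  next
    case (Suc d)
    have IH: "(\<Sum>i\<in>{d+1..<d+1+k}. f i) \<ge> 3" using Suc by simp
    have sh: "(\<Sum>i\<in>{Suc (d+1)..<Suc (d+1)+k}. f i) = (\<Sum>i\<in>{d+1..<d+1+k}. f i) - f (d+1) + f (d+1+k)"
      by (rule block_shift)
    have "f (d+1) \<in> {-1,1}" "f (d+1+k) \<in> {-1,1}" using pm Suc.prems by auto
    then have "f (d+1) \<le> 1" "f (d+1+k) \<ge> -1" by auto
    moreover have e: "Suc d + 1 = Suc (d+1)" by simp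
    ultimately have ge: "(\<Sum>i\<in>{Suc d+1..<Suc d+1+k}. f i) \<ge> 1" unfolding e using sh IH by linarith
    have "(\<Sum>i\<in>{Suc d+1..<Suc d+1+k}. f i) \<noteq> 1" using nogood[of "Suc d + 1"] Suc.prems ge by auto
    moreover have "(\<Sum>i\<in>{Suc d+1..<Suc d+1+k}. f i) \<noteq> 2" using odd[of "Suc d + 1"] Suc.prems by auto
    ultimately show ?case using ge by simp
  qed
  assume "1 \<le> a" "a + k \<le> n + 1"
  then show ?thesis using main[of "a - 1"] by simp
qed

theorem corollary2p4:
  fixes k q n :: nat and s :: nat and f :: "nat \<Rightarrow> int"
  assumes "k \<ge> 3" and "odd k"
    and "s = (q + (k - 3) div 2) mod 3"
    and "n \<ge> k"
    and "real n \<ge> (real k)^2 / 6 + (real q - real s) / 3 * real k + real s - 1/2"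
    and "\<forall>i\<in>{1..n}. f i \<in> {-1, 1}"
    and "\<bar>\<Sum>i\<in>{1..n}. f i\<bar> \<le> int q"
  shows "\<exists>a. kblock k a \<subseteq> {1..n} \<and> \<bar>\<Sum>i\<in>kblock k a. f i\<bar> = 1"
proof (rule ccontr)
  assume H: "\<not> ?thesis"
  obtain j where j: "k = 2*j+1" using assms(2) by (rule oddE)
  define h where "h = j - 1"
  have k: "k = 2*h+3" using j assms(1) unfolding h_def by simp
  define t where "t = (q + h) div 3"
  have hdef: "(k - 3) div 2 = h" using k by simp
  have s: "s = (q+h) mod 3" using assms(3) hdef by simp
  have qt: "q + h = 3*t + s" unfolding t_def s by simp
  have s2: "s \<le> 2" using s by simp
  have rq: "real q = 3*real t + real s - real h" using arg_cong[OF qt, of real] by simp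
  have rk: "real k = 2*real h + 3" using k by simp
  have "(real k)^2 / 6 + (real q - real s) / 3 * real k + real s - 1/2 = real (k*t + h + 1 + s)"
    unfolding rq using rk by (simp add: power2_eq_square field_simps)
  then have nb: "n \<ge> k*t + h + 1 + s" using assms(5) by linarith
  have blk: "kblock k a \<subseteq> {1..n}" if "1 \<le> a" "a + k \<le> n + 1" for a
    using that unfolding kblock_def by auto
  have nogood: "\<bar>\<Sum>i\<in>{a..<a+k}. f i\<bar> \<noteq> 1" if "1 \<le> a" "a + k \<le> n + 1" for a
    using H blk[OF that] unfolding kblock_def by auto
  have k0: "k > 0" using assms(1) by simp
  have pos: "(\<Sum>i\<in>{1..n}. g i) \<ge> int q + 1"
    if pm: "\<forall>i\<in>{1..n}. g i \<in> {-1,1}"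
      and ng: "\<And>a. 1 \<le> a \<Longrightarrow> a + k \<le> n + 1 \<Longrightarrow> \<bar>\<Sum>i\<in>{a..<a+k}. g i\<bar> \<noteq> 1"
      and g1: "(\<Sum>i\<in>{1..<1+k}. g i) \<ge> 1" for g :: "nat \<Rightarrow> int"
  proof -
    have b: "\<And>a. 1 \<le> a \<Longrightarrow> a + k \<le> n + 1 \<Longrightarrow> (\<Sum>i\<in>{a..<a+k}. g i) \<ge> 3"
      using all_ge3[OF pm assms(2) ng g1] by blast
    show ?thesis using arith_final[OF k qt s2 nb total_bound[OF b pm assms(4) k0]] .
  qed
  have odd1: "odd (\<Sum>i\<in>{1..<1+k}. f i)"
  proof -
    have "even ((\<Sum>i\<in>{1..<1+k}. f i) - int (card {1..<1+k}))"
      by (rule sum_pm_parity) (use assms(6,4) in auto)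
    then show ?thesis using assms(2) by simp
  qed
  have n1: "\<bar>\<Sum>i\<in>{1..<1+k}. f i\<bar> \<noteq> 1" using nogood[of 1] assms(4) by simp
  show False
  proof (cases "(\<Sum>i\<in>{1..<1+k}. f i) \<ge> 1")
    case True
    then show False using pos[OF assms(6) nogood True] assms(7) by simp
  next
    case False
    have "(\<Sum>i\<in>{1..<1+k}. f i) \<noteq> 0" using odd1 by (metis dvd_0_right)
    then have g1: "(\<Sum>i\<in>{1..<1+k}. - f i) \<ge> 1" using False by (simp add: sum_negf)
    have pm': "\<forall>i\<in>{1..n}. - f i \<in> {-1,1}" using assms(6) by auto
    have ng': "\<bar>\<Sum>i\<in>{a..<a+k}. - f i\<bar> \<noteq> 1" if "1 \<le> a" "a + k \<le> n + 1" for a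
      using nogood[OF that] by (simp add: sum_negf)
    show False using pos[OF pm' ng' g1] assms(7) by (simp add: sum_negf)
  qed
qed

end
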